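(* Let $\mathbb{F}$ be a field, $T_1,T_2\subseteq\mathbb{F}$ sets of size $n$, and $d,\ell,s,r$ natural numbers with $d\ge\ell$ and $r=s-\lfloor\frac{d-\ell}{n}\rfloor$. Let $f\colon T_1\times T_2\to\mathbb{F}_{<s}[z_1,z_2]$, and let $P=\sum_{i=\ell}^dP_i(x_1)x_2^{d-i}$ be a polynomial of total degree at most $d$ (so $\deg P_i\le i$) with $\Delta^{(s)}_{\mathrm{mult}}(f,\mathrm{Enc}^{(s)}_{T_1\times T_2}(P))<\frac12n^2(s-\frac dn)$. With $g\colon T_1\to\mathbb{F}_{<r}[z_1]$ and $w\colon T_1\times[r]\to\mathbb{Z}_{\ge0}$ defined from $f$ as below, \[\Gamma^{s,d,\ell}_w(g,P_\ell)\le\Delta^{(s)}_{\mathrm{mult}}\big(f,\mathrm{Enc}^{(s)}_{T_1\times T_2}(P)\big)<\frac12n^2\Big(s-\frac dn\Big).\]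
   Context: Encodings: $\mathrm{Enc}^{(s)}_{T_1\times T_2}(P)(a,b)=P(a+z_1,b+z_2)\bmod\langle z_1,z_2\rangle^s$; for univariate $G$ and $t\ge1$, $\mathrm{Enc}^{(t)}_{T_2}(G)(b)=G(b+z_2)\bmod z_2^t$. $d^{(t)}_{\min}(Q)$ is the minimum of $t$ and the lowest degree of a monomial with nonzero coefficient in $Q$ ($t$ if $Q=0$); $\Delta^{(t)}_{\mathrm{mult}}(f,g)=\sum_{\mathbf a}(t-d^{(t)}_{\min}(f(\mathbf a)-g(\mathbf a)))$ over the domain. Write $f(a,b)=\sum_{i,j}f_{(i,j)}(a,b)z_1^iz_2^j$. For $a\in T_1$ and $i\in[r]=\{0,\dots,r-1\}$, let $f^{(i,a)}\colon T_2\to\mathbb{F}_{<s-i}[z_2]$, $f^{(i,a)}(b)=\sum_{j\in[s-i]}f_{(i,j)}(a,b)z_2^j$. Let $G^{(i,a)}\in\mathbb{F}_{\le d-\ell}[x_2]$ be the (unique) polynomial of degree $\le d-\ell$ with $\Delta^{(s-i)}_{\mathrm{mult}}(f^{(i,a)},\mathrm{Enc}^{(s-i)}(G^{(i,a)}))<\frac12((s-i)n-(d-\ell))$ if one exists, and $G^{(i,a)}=0$ otherwise. Set $w(a,i)=\min\{\Delta^{(s-i)}_{\mathrm{mult}}(f^{(i,a)},\mathrm{Enc}^{(s-i)}(G^{(i,a)})),\frac n2((s-i)-\frac{d-\ell}{n})\}$ and $g(a)=\sum_{i\in[r]}\mathrm{Coeff}_{x_2^{d-\ell}}(G^{(i,a)})z_1^i$.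 Finally, with $A_i(g,R)=\{a\in T_1:\max\{j\in[r+1]:g(a)\equiv R(a+z_1)\bmod\langle z_1\rangle^j\}=i\}$ for $i\in[r+1]$, $\Gamma^{s,d,\ell}_w(g,R)=\sum_{i=0}^{r-1}\sum_{a\in A_i(g,R)}\max\{n((s-i)-\frac{d-\ell}{n})-w(a,i),\max_{j<i}w(a,j)\}+\sum_{a\in A_r(g,R)}\max_{j<r}w(a,j)$ (empty maxima ignored). *)

theory Defs
  imports "HOL-Computational_Algebra.Polynomial" Complex_Main
begin

text \<open>Truncated bivariate polynomials in z1, z2 are represented by their coefficient
  functions Q :: nat => nat => 'a, with Q i j the coefficient of z1^i z2^j; truncated
  univariate polynomials in z2 (resp. z1) by coefficient functions q :: nat => 'a.
  A bivariate polynomial P(x1,x2) is an element of 'a poly poly, the outer variable being x2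
  and the coefficients being polynomials in x1.\<close>

definition dmin2 :: "nat \<Rightarrow> (nat \<Rightarrow> nat \<Rightarrow> 'a::zero) \<Rightarrow> nat" where
  "dmin2 t Q = (if \<exists>i j. Q i j \<noteq> 0
                then min t (LEAST k. \<exists>i j. i + j = k \<and> Q i j \<noteq> 0) else t)"

definition dmin1 :: "nat \<Rightarrow> (nat \<Rightarrow> 'a::zero) \<Rightarrow> nat" where
  "dmin1 t q = (if \<exists>j. q j \<noteq> 0 then min t (LEAST j. q j \<noteq> 0) else t)"

definition delta2 :: "nat \<Rightarrow> 'a set \<Rightarrow> 'a set \<Rightarrow> ('a \<Rightarrow> 'a \<Rightarrow> nat \<Rightarrow> nat \<Rightarrow> 'b::ab_group_add)
    \<Rightarrow> ('a \<Rightarrow> 'a \<Rightarrow> nat \<Rightarrow> nat \<Rightarrow> 'b) \<Rightarrow> nat" where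
  "delta2 t T1 T2 f g = (\<Sum>(a, b) \<in> T1 \<times> T2. t - dmin2 t (\<lambda>i j. f a b i j - g a b i j))"

definition delta1 :: "nat \<Rightarrow> 'a set \<Rightarrow> ('a \<Rightarrow> nat \<Rightarrow> 'b::ab_group_add)
    \<Rightarrow> ('a \<Rightarrow> nat \<Rightarrow> 'b) \<Rightarrow> nat" where
  "delta1 t T f g = (\<Sum>b \<in> T. t - dmin1 t (\<lambda>j. f b j - g b j))"

text \<open>Enc^(s)(P)(a,b) = P(a+z1, b+z2) mod <z1,z2>^s, coefficient of z1^i z2^j.\<close>
definition enc2 :: "nat \<Rightarrow> 'a::comm_ring_1 poly poly \<Rightarrow> 'a \<Rightarrow> 'a \<Rightarrow> nat \<Rightarrow> nat \<Rightarrow> 'a" where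
  "enc2 s P a b i j = (if i + j < s then
      coeff (coeff (map_poly (\<lambda>p. p \<circ>\<^sub>p [:a, 1:]) (P \<circ>\<^sub>p [:[:b:], 1:])) j) i else 0)"

definition enc1 :: "nat \<Rightarrow> 'a::comm_ring_1 poly \<Rightarrow> 'a \<Rightarrow> nat \<Rightarrow> 'a" where
  "enc1 t G b j = (if j < t then coeff (G \<circ>\<^sub>p [:b, 1:]) j else 0)"

definition fia :: "nat \<Rightarrow> ('a \<Rightarrow> 'a \<Rightarrow> nat \<Rightarrow> nat \<Rightarrow> 'b::zero) \<Rightarrow> nat \<Rightarrow> 'a \<Rightarrow> 'a \<Rightarrow> nat \<Rightarrow> 'b" where
  "fia s f i a b j = (if j < s - i then f a b i j else 0)"

definition Gsel :: "nat \<Rightarrow> nat \<Rightarrow> nat \<Rightarrow> nat \<Rightarrow> 'a::field set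
    \<Rightarrow> ('a \<Rightarrow> 'a \<Rightarrow> nat \<Rightarrow> nat \<Rightarrow> 'a) \<Rightarrow> nat \<Rightarrow> 'a \<Rightarrow> 'a poly" where
  "Gsel s d l n T2 f i a =
     (if \<exists>G. degree G \<le> d - l \<and>
            real (delta1 (s - i) T2 (fia s f i a) (enc1 (s - i) G))
              < 1/2 * (real (s - i) * real n - real (d - l))
      then (THE G. degree G \<le> d - l \<and>
            real (delta1 (s - i) T2 (fia s f i a) (enc1 (s - i) G))
              < 1/2 * (real (s - i) * real n - real (d - l)))
      else 0)"

definition wfun :: "nat \<Rightarrow> nat \<Rightarrow> nat \<Rightarrow> nat \<Rightarrow> 'a::field set
    \<Rightarrow> ('a \<Rightarrow> 'a \<Rightarrow> nat \<Rightarrow> nat \<Rightarrow> 'a) \<Rightarrow> 'a \<Rightarrow> nat \<Rightarrow> real" where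
  "wfun s d l n T2 f a i =
     min (real (delta1 (s - i) T2 (fia s f i a) (enc1 (s - i) (Gsel s d l n T2 f i a))))
         (real n / 2 * (real (s - i) - real (d - l) / real n))"

definition gfun :: "nat \<Rightarrow> nat \<Rightarrow> nat \<Rightarrow> nat \<Rightarrow> nat \<Rightarrow> 'a::field set
    \<Rightarrow> ('a \<Rightarrow> 'a \<Rightarrow> nat \<Rightarrow> nat \<Rightarrow> 'a) \<Rightarrow> 'a \<Rightarrow> nat \<Rightarrow> 'a" where
  "gfun r s d l n T2 f a i = (if i < r then coeff (Gsel s d l n T2 f i a) (d - l) else 0)"

text \<open>A_i(g,R): g(a) = R(a+z1) mod z1^j means agreement of the coefficients of z1^k, k < j.\<close>
definition Aset :: "nat \<Rightarrow> 'a::comm_ring_1 set \<Rightarrow> ('a \<Rightarrow> nat \<Rightarrow> 'a) \<Rightarrow> 'a poly \<Rightarrow> nat \<Rightarrow> 'a set" where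
  "Aset r T1 g R i = {a \<in> T1. Max {j. j \<le> r \<and> (\<forall>k<j. g a k = coeff (R \<circ>\<^sub>p [:a, 1:]) k)} = i}"

definition Gamma :: "nat \<Rightarrow> nat \<Rightarrow> nat \<Rightarrow> nat \<Rightarrow> nat \<Rightarrow> 'a::comm_ring_1 set
    \<Rightarrow> ('a \<Rightarrow> nat \<Rightarrow> real) \<Rightarrow> ('a \<Rightarrow> nat \<Rightarrow> 'a) \<Rightarrow> 'a poly \<Rightarrow> real" where
  "Gamma s d l n r T1 w g R =
     (\<Sum>i<r. \<Sum>a \<in> Aset r T1 g R i.
        (if i = 0 then real n * (real (s - i) - real (d - l) / real n) - w a i
         else max (real n * (real (s - i) - real (d - l) / real n) - w a i)
                  (Max (w a ` {..<i}))))
   + (\<Sum>a \<in> Aset r T1 g R r. (if r = 0 then 0 else Max (w a ` {..<r})))"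

end

theory Submission
  imports Defs
begin

definition Hp :: "'a::comm_ring_1 poly poly \<Rightarrow> 'a \<Rightarrow> nat \<Rightarrow> 'a poly" where
  "Hp P a i = map_poly (\<lambda>p. coeff (p \<circ>\<^sub>p [:a, 1:]) i) P"

lemma coeff_Hp: "coeff (Hp P a i) k = coeff (coeff P k \<circ>\<^sub>p [:a, 1:]) i"
  unfolding Hp_def by (subst coeff_map_poly) auto

lemma Hp_add: "Hp (X + Y) a i = Hp X a i + Hp Y a i"
  by (rule poly_eqI) (simp add: coeff_Hp pcompose_add)

lemma Hp_const: "Hp [:c:] a i = [:coeff (c \<circ>\<^sub>p [:a, 1:]) i:]"
  by (rule poly_eqI) (auto simp: coeff_Hp coeff_pCons split: nat.splits)

lemma Hp_pCons: "Hp (pCons c P) a i = pCons (coeff (c \<circ>\<^sub>p [:a, 1:]) i) (Hp P a i)"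
  by (rule poly_eqI) (auto simp: coeff_Hp coeff_pCons split: nat.splits)

lemma Hp_smult: "Hp (smult [:b:] R) a i = smult b (Hp R a i)"
  by (rule poly_eqI) (simp add: coeff_Hp pcompose_smult)

lemma Hp_lin: "Hp ([:[:b:], 1:] * R) a i = [:b, 1:] * Hp R a i"
  by (simp add: Hp_add Hp_smult Hp_pCons)

lemma Hp_pcompose: "Hp (P \<circ>\<^sub>p [:[:b:], 1:]) a i = Hp P a i \<circ>\<^sub>p [:b, 1:]"
proof (induct P rule: pCons_induct)
  case 0
  then show ?case by (simp add: Hp_def)
next
  case (pCons c P)
  then show ?case
    by (simp only: pcompose_pCons Hp_add Hp_const Hp_lin)
      (simp add: Hp_pCons Hp_add Hp_smult pcompose_pCons Hp_const)
qed

lemma enc2_eq: "enc2 s P a b i j = (if i + j < s then coeff (Hp P a i \<circ>\<^sub>p [:b, 1:]) j else 0)"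
proof -
  have "coeff (map_poly (\<lambda>p. p \<circ>\<^sub>p [:a, 1:]) (P \<circ>\<^sub>p [:[:b:], 1:])) j
        = coeff (P \<circ>\<^sub>p [:[:b:], 1:]) j \<circ>\<^sub>p [:a, 1:]"
    by (subst coeff_map_poly) auto
  then show ?thesis unfolding enc2_def
    by (simp add: coeff_Hp[symmetric] Hp_pcompose)
qed


lemma dmin1_le: "dmin1 t q \<le> t"
  unfolding dmin1_def by auto

lemma dmin1_zero: "j < dmin1 t q \<Longrightarrow> q j = 0"
  unfolding dmin1_def
  by (metis (mono_tags, lifting) Least_le min.strict_boundedE not_le)

lemma dmin1_ge: "m \<le> t \<Longrightarrow> (\<And>j. j < m \<Longrightarrow> q j = 0) \<Longrightarrow> m \<le> dmin1 t q"
proof (cases "\<exists>j. q j \<noteq> 0")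
  case True
  assume m: "m \<le> t" "\<And>j. j < m \<Longrightarrow> q j = 0"
  have "q (LEAST j. q j \<noteq> 0) \<noteq> 0" by (rule LeastI_ex[OF True])
  then have "m \<le> (LEAST j. q j \<noteq> 0)" using m(2) not_le by blast
  then show ?thesis using True m(1) unfolding dmin1_def by simp
next
  case False
  assume "m \<le> t"
  then show ?thesis using False unfolding dmin1_def by simp
qed

lemma dmin1_le_idx: "q j \<noteq> 0 \<Longrightarrow> dmin1 t q \<le> j"
  using dmin1_zero by (metis not_le)

lemma dmin1_tri:
  fixes u v w :: "nat \<Rightarrow> 'b::ab_group_add"
  shows "min (dmin1 t (\<lambda>j. u j - v j)) (dmin1 t (\<lambda>j. v j - w j)) \<le> dmin1 t (\<lambda>j. u j - w j)"
proof (rule dmin1_ge)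
  show "min (dmin1 t (\<lambda>j. u j - v j)) (dmin1 t (\<lambda>j. v j - w j)) \<le> t"
    by (meson dmin1_le min.coboundedI1)
  fix j assume "j < min (dmin1 t (\<lambda>j. u j - v j)) (dmin1 t (\<lambda>j. v j - w j))"
  then have "u j - v j = 0" "v j - w j = 0"
    using dmin1_zero[of j t "\<lambda>j. u j - v j"] dmin1_zero[of j t "\<lambda>j. v j - w j"] by auto
  then show "u j - w j = 0" by simp
qed

lemma delta1_tri:
  fixes u v w :: "'a \<Rightarrow> nat \<Rightarrow> 'b::ab_group_add"
  shows "delta1 t T u w \<le> delta1 t T u v + delta1 t T v w"
  unfolding delta1_def sum.distrib[symmetric]
proof (rule sum_mono)
  fix b
  have "min (dmin1 t (\<lambda>j. u b j - v b j)) (dmin1 t (\<lambda>j. v b j - w b j)) \<le> dmin1 t (\<lambda>j. u b j - w b j)"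
    by (rule dmin1_tri)
  then show "t - dmin1 t (\<lambda>j. u b j - w b j) \<le> t - dmin1 t (\<lambda>j. u b j - v b j) + (t - dmin1 t (\<lambda>j. v b j - w b j))"
    by linarith
qed

lemma dmin1_sym:
  fixes u v :: "nat \<Rightarrow> 'b::ab_group_add"
  shows "dmin1 t (\<lambda>j. u j - v j) = dmin1 t (\<lambda>j. v j - u j)"
proof -
  have "\<And>j. (u j - v j \<noteq> 0) = (v j - u j \<noteq> 0)" by (metis right_minus_eq)
  then show ?thesis unfolding dmin1_def by simp
qed

lemma delta1_sym:
  fixes u v :: "'a \<Rightarrow> nat \<Rightarrow> 'b::ab_group_add"
  shows "delta1 t T u v = delta1 t T v u"
  unfolding delta1_def using dmin1_sym by metis

lemma enc1_diff: "enc1 t H1 b j - enc1 t H2 b j = enc1 t (H1 - H2) b j"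
  unfolding enc1_def by (simp add: pcompose_diff)

lemma coeff_X_pow_mult: "coeff ([:0, 1:] ^ k * p) k = coeff p 0"
  by (induct k) auto

lemma pcompose_pow: "(p ^ k) \<circ>\<^sub>p q = (p \<circ>\<^sub>p q) ^ k"
  by (induct k) (auto simp: pcompose_mult pcompose_1)

lemma coeff_order_nz:
  fixes H :: "'a::field poly"
  assumes "H \<noteq> 0"
  shows "coeff (H \<circ>\<^sub>p [:b, 1:]) (order b H) \<noteq> 0"
proof -
  obtain q where q: "H = [:- b, 1:] ^ order b H * q" "\<not> [:- b, 1:] dvd q"
    using order_decomp[OF assms] by blast
  have pq: "poly q b \<noteq> 0" using q(2) dvd_iff_poly_eq_0[of "-b" q] by simp
  have "[:- b, 1:] \<circ>\<^sub>p [:b, 1:] = [:0, 1:]" by (simp add: pcompose_pCons)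
  then have "H \<circ>\<^sub>p [:b, 1:] = [:0, 1:] ^ order b H * (q \<circ>\<^sub>p [:b, 1:])"
    by (subst q(1)) (simp add: pcompose_mult pcompose_pow)
  then have "coeff (H \<circ>\<^sub>p [:b, 1:]) (order b H) = coeff (q \<circ>\<^sub>p [:b, 1:]) 0"
    by (simp add: coeff_X_pow_mult)
  also have "\<dots> = poly q b" by (metis poly_0_coeff_0 poly_pcompose poly_pCons add_0 mult_zero_left add.right_neutral mult_zero_right poly_0)
  finally show ?thesis using pq by simp
qed

lemma dmin1_enc1_le:
  fixes H :: "'a::field poly"
  assumes "H \<noteq> 0"
  shows "dmin1 t (enc1 t H b) \<le> order b H"
proof (cases "order b H < t")
  case True
  then have "enc1 t H b (order b H) \<noteq> 0" using coeff_order_nz[OF assms] by (simp add: enc1_def)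
  then show ?thesis by (rule dmin1_le_idx)
next
  case False
  then show ?thesis using dmin1_le[of t] by (meson le_trans not_le less_imp_le)
qed

lemma sum_order_le:
  fixes H :: "'a::field poly"
  assumes "finite T" "H \<noteq> 0"
  shows "(\<Sum>b\<in>T. order b H) \<le> degree H"
  using assms
proof (induct T arbitrary: H rule: finite_induct)
  case empty
  then show ?case by simp
next
  case (insert c T)
  obtain q where q: "H = [:- c, 1:] ^ order c H * q" "\<not> [:- c, 1:] dvd q"
    using order_decomp[OF insert.prems] by blast
  have q0: "q \<noteq> 0" using q insert.prems by auto
  have pw0: "[:- c, 1:] ^ order c H \<noteq> 0" by simp
  have "\<And>b. b \<in> T \<Longrightarrow> order b H = order b q"
  proof -
    fix b assume "b \<in> T"
    then have "b \<noteq> c" using insert.hyps by auto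
    then have "order b ([:- c, 1:] ^ order c H) = 0"
      by (intro order_0I) (simp add: poly_power)
    then show "order b H = order b q"
      using order_mult[of "[:- c, 1:] ^ order c H" q b] q(1) insert.prems by simp
  qed
  then have "(\<Sum>b\<in>T. order b H) = (\<Sum>b\<in>T. order b q)" by simp
  also have "\<dots> \<le> degree q" using insert.hyps(3) q0 by blast
  finally have "(\<Sum>b\<in>T. order b H) \<le> degree q" .
  moreover have "degree H = order c H + degree q"
    by (subst q(1), subst degree_mult_eq[OF pw0 q0]) (simp add: degree_power_eq degree_linear_power)
  ultimately show ?case using insert.hyps by simp
qed

lemma delta1_enc_dist:
  fixes H1 H2 :: "'a::field poly"
  assumes "finite T" "card T = n" "H1 \<noteq> H2" "degree H1 \<le> m" "degree H2 \<le> m"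
  shows "real t * real n - real m \<le> real (delta1 t T (enc1 t H1) (enc1 t H2))"
proof -
  define H where "H = H1 - H2"
  have H0: "H \<noteq> 0" using assms(3) H_def by simp
  have dH: "degree H \<le> m" unfolding H_def using assms(4,5) degree_diff_le by blast
  have "delta1 t T (enc1 t H1) (enc1 t H2) = (\<Sum>b\<in>T. t - dmin1 t (enc1 t H b))"
    unfolding delta1_def H_def enc1_diff by simp
  then have "real (delta1 t T (enc1 t H1) (enc1 t H2)) = (\<Sum>b\<in>T. real (t - dmin1 t (enc1 t H b)))"
    by simp
  also have "\<dots> \<ge> (\<Sum>b\<in>T. real t - real (order b H))"
  proof (rule sum_mono)
    fix b show "real t - real (order b H) \<le> real (t - dmin1 t (enc1 t H b))"
      using dmin1_enc1_le[OF H0, of t b] dmin1_le[of t] by linarith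
  qed
  finally have "(\<Sum>b\<in>T. real t - real (order b H)) \<le> real (delta1 t T (enc1 t H1) (enc1 t H2))" .
  moreover have "(\<Sum>b\<in>T. real t - real (order b H)) = real t * real n - real (\<Sum>b\<in>T. order b H)"
    by (simp add: sum_subtractf assms(2))
  moreover have "real (\<Sum>b\<in>T. order b H) \<le> real m"
    using sum_order_le[OF assms(1) H0] dH of_nat_le_iff le_trans by blast
  ultimately show ?thesis by linarith
qed


lemma dmin2_row:
  fixes Q :: "nat \<Rightarrow> nat \<Rightarrow> 'b::zero"
  shows "dmin2 t Q \<le> i + dmin1 (t - i) (\<lambda>j. if j < t - i then Q i j else 0)"
proof (cases "\<exists>j. (if j < t - i then Q i j else 0) \<noteq> 0")
  case True
  define L where "L = (LEAST j. (if j < t - i then Q i j else 0) \<noteq> 0)"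
  have "(if L < t - i then Q i L else 0) \<noteq> 0" unfolding L_def by (rule LeastI_ex[OF True])
  then have QL: "Q i L \<noteq> 0" "L < t - i" by (auto split: if_splits)
  have d1: "dmin1 (t - i) (\<lambda>j. if j < t - i then Q i j else 0) = L"
    unfolding dmin1_def L_def[symmetric] using True QL(2) by simp
  have ex: "\<exists>i' j'. Q i' j' \<noteq> 0" using QL by blast
  have "(LEAST k. \<exists>i' j'. i' + j' = k \<and> Q i' j' \<noteq> 0) \<le> i + L"
    by (rule Least_le) (use QL in blast)
  then have "dmin2 t Q \<le> i + L" unfolding dmin2_def using ex by simp
  then show ?thesis using d1 by simp
next
  case False
  then have "dmin1 (t - i) (\<lambda>j. if j < t - i then Q i j else 0) = t - i"
    unfolding dmin1_def by simp
  moreover have "dmin2 t Q \<le> t" unfolding dmin2_def by auto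
  ultimately show ?thesis by simp
qed

lemma Gsel_eq:
  fixes T2 :: "'a::field set"
  assumes fin: "finite T2" and card: "card T2 = n"
    and deg: "degree G0 \<le> d - l"
    and cl: "real (delta1 (s - i) T2 (fia s f i a) (enc1 (s - i) G0))
              < 1/2 * (real (s - i) * real n - real (d - l))"
  shows "Gsel s d l n T2 f i a = G0"
proof -
  let ?F = "fia s f i a" and ?t = "s - i"
  have uniq: "G = G0" if "degree G \<le> d - l"
     "real (delta1 ?t T2 ?F (enc1 ?t G)) < 1/2 * (real ?t * real n - real (d - l))" for G
  proof (rule ccontr)
    assume ne: "G \<noteq> G0"
    have "real ?t * real n - real (d - l) \<le> real (delta1 ?t T2 (enc1 ?t G) (enc1 ?t G0))"
      by (rule delta1_enc_dist[OF fin card ne that(1) deg])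
    moreover have "delta1 ?t T2 (enc1 ?t G) (enc1 ?t G0) \<le> delta1 ?t T2 (enc1 ?t G) ?F + delta1 ?t T2 ?F (enc1 ?t G0)"
      by (rule delta1_tri)
    moreover have "delta1 ?t T2 (enc1 ?t G) ?F = delta1 ?t T2 ?F (enc1 ?t G)" by (rule delta1_sym)
    ultimately have "real ?t * real n - real (d - l) \<le> real (delta1 ?t T2 ?F (enc1 ?t G)) + real (delta1 ?t T2 ?F (enc1 ?t G0))"
      by (metis (no_types, lifting) of_nat_add of_nat_le_iff order_trans)
    then show False using that(2) cl unfolding right_diff_distrib by linarith
  qed
  have ex: "\<exists>G. degree G \<le> d - l \<and>
            real (delta1 ?t T2 ?F (enc1 ?t G)) < 1/2 * (real ?t * real n - real (d - l))"
    using deg cl by blast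
  show ?thesis unfolding Gsel_def using ex
    by (simp only: if_True) (rule the_equality, use deg cl uniq in auto)
qed

lemma Gsel_deg:
  fixes T2 :: "'a::field set"
  assumes fin: "finite T2" and card: "card T2 = n"
  shows "degree (Gsel s d l n T2 f i a) \<le> d - l"
proof (cases "\<exists>G. degree G \<le> d - l \<and>
            real (delta1 (s - i) T2 (fia s f i a) (enc1 (s - i) G))
              < 1/2 * (real (s - i) * real n - real (d - l))")
  case True
  then obtain G where "degree G \<le> d - l" "real (delta1 (s - i) T2 (fia s f i a) (enc1 (s - i) G))
              < 1/2 * (real (s - i) * real n - real (d - l))" by blast
  then show ?thesis using Gsel_eq[OF fin card] by metis
next
  case False
  then show ?thesis unfolding Gsel_def by (subst if_not_P[OF False]) simp
qed

lemma Aset_mismatch: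
  assumes "a \<in> Aset r T1 g R i" "i < r"
  shows "g a i \<noteq> coeff (R \<circ>\<^sub>p [:a, 1:]) i"
proof
  assume eq: "g a i = coeff (R \<circ>\<^sub>p [:a, 1:]) i"
  define S where "S = {j. j \<le> r \<and> (\<forall>k<j. g a k = coeff (R \<circ>\<^sub>p [:a, 1:]) k)}"
  have MS: "Max S = i" using assms(1) unfolding Aset_def S_def by simp
  have fS: "finite S" unfolding S_def by (rule finite_subset[of _ "{..r}"]) auto
  have "0 \<in> S" unfolding S_def by simp
  then have "i \<in> S" using MS fS Max_in by (metis empty_iff)
  then have "Suc i \<in> S" using eq assms(2) unfolding S_def by (auto simp: less_Suc_eq)
  then have "Suc i \<le> Max S" using fS by simp
  then show False using MS by simp
qed


theorem lemma7p1:
  fixes T1 T2 :: "'a::field set" and n d l s r :: nat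
    and f :: "'a \<Rightarrow> 'a \<Rightarrow> nat \<Rightarrow> nat \<Rightarrow> 'a" and P :: "'a poly poly"
  assumes "finite T1" and "finite T2" and "card T1 = n" and "card T2 = n"
    and "l \<le> d"
    and "int r = int s - \<lfloor>real (d - l) / real n\<rfloor>"
    and "\<forall>a\<in>T1. \<forall>b\<in>T2. \<forall>i j. s \<le> i + j \<longrightarrow> f a b i j = 0"
    and "\<forall>k. coeff P k \<noteq> 0 \<longrightarrow> k \<le> d - l \<and> degree (coeff P k) \<le> d - k"
    and "real (delta2 s T1 T2 f (enc2 s P)) < 1/2 * real n ^ 2 * (real s - real d / real n)"
  shows "Gamma s d l n r T1 (wfun s d l n T2 f) (gfun r s d l n T2 f) (coeff P (d - l))
           \<le> real (delta2 s T1 T2 f (enc2 s P))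
         \<and> real (delta2 s T1 T2 f (enc2 s P)) < 1/2 * real n ^ 2 * (real s - real d / real n)"
proof (rule conjI[OF _ assms(9)])
  note fin1 = assms(1) and fin2 = assms(2) and card2 = assms(4)
  have npos: "n > 0"
  proof (rule ccontr)
    assume "\<not> n > 0" then have "n = 0" by simp
    then show False using assms(9) by simp
  qed
  have "\<lfloor>real (d - l) / real n\<rfloor> \<ge> 0" by simp
  then have rs: "r \<le> s" using assms(6) by linarith
  have degP: "degree P \<le> d - l"
    by (rule degree_le) (use assms(8) in \<open>metis not_le\<close>)
  define H where "H a i = Hp P a i" for a i
  have degH: "degree (H a i) \<le> d - l" for a i
    by (rule degree_le) (use degP in \<open>auto simp: H_def coeff_Hp coeff_eq_0\<close>)
  define D where "D a i = real (delta1 (s - i) T2 (fia s f i a) (enc1 (s - i) (H a i)))" for a i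
  define S where "S a = real (\<Sum>b\<in>T2. s - dmin2 s (\<lambda>i j. f a b i j - enc2 s P a b i j))" for a
  define hb where "hb i = 1/2 * (real (s - i) * real n - real (d - l))" for i
  define w where "w = wfun s d l n T2 f"
  define g where "g = gfun r s d l n T2 f"
  define R where "R = coeff P (d - l)"
  have S0: "S a \<ge> 0" for a unfolding S_def by (rule of_nat_0_le_iff)
  have delta2_eq: "real (delta2 s T1 T2 f (enc2 s P)) = (\<Sum>a\<in>T1. S a)"
    unfolding delta2_def S_def by (simp add: sum.cartesian_product[symmetric])
  have DS: "D a i \<le> S a" for a i
  proof -
    have row: "(\<lambda>j. fia s f i a b j - enc1 (s - i) (H a i) b j)
          = (\<lambda>j. if j < s - i then (\<lambda>i j. f a b i j - enc2 s P a b i j) i j else 0)" for b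
      by (rule ext) (auto simp: fia_def enc1_def enc2_eq H_def)
    have "delta1 (s - i) T2 (fia s f i a) (enc1 (s - i) (H a i))
          \<le> (\<Sum>b\<in>T2. s - dmin2 s (\<lambda>i j. f a b i j - enc2 s P a b i j))"
      unfolding delta1_def
    proof (rule sum_mono)
      fix b
      show "s - i - dmin1 (s - i) (\<lambda>j. fia s f i a b j - enc1 (s - i) (H a i) b j)
            \<le> s - dmin2 s (\<lambda>i j. f a b i j - enc2 s P a b i j)"
        unfolding row using dmin2_row[of s "\<lambda>i j. f a b i j - enc2 s P a b i j" i] by linarith
    qed
    then show ?thesis unfolding D_def S_def by linarith
  qed
  have hb_eq: "real n / 2 * (real (s - i) - real (d - l) / real n) = hb i" for i
    unfolding hb_def using npos by (simp add: field_simps)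
  have hb_eq2: "real n * (real (s - i) - real (d - l) / real n) = 2 * hb i" for i
    unfolding hb_def using npos by (simp add: field_simps)
  define X where "X a i = real (delta1 (s - i) T2 (fia s f i a) (enc1 (s - i) (Gsel s d l n T2 f i a)))" for a i
  have w_eq: "w a i = min (X a i) (hb i)" for a i
    unfolding w_def wfun_def X_def hb_eq ..
  have Gsel_H: "Gsel s d l n T2 f i a = H a i" if "D a i < hb i" for a i
    using Gsel_eq[OF fin2 card2 degH, of s i f a] that unfolding D_def hb_def by blast
  have wD: "w a i \<le> D a i" for a i
  proof (cases "D a i < hb i")
    case True
    then have "X a i = D a i" using Gsel_H unfolding X_def D_def by simp
    then show ?thesis using w_eq by simp
  next
    case False
    then show ?thesis using w_eq by simp
  qed
  have wS: "w a i \<le> S a" for a i using wD DS order_trans by blast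
  have main: "2 * hb i - w a i \<le> D a i" if "a \<in> Aset r T1 g R i" "i < r" for a i
  proof -
    have "g a i \<noteq> coeff (R \<circ>\<^sub>p [:a, 1:]) i" by (rule Aset_mismatch[OF that])
    moreover have "coeff (H a i) (d - l) = coeff (R \<circ>\<^sub>p [:a, 1:]) i"
      unfolding H_def R_def by (simp add: coeff_Hp)
    ultimately have ne: "Gsel s d l n T2 f i a \<noteq> H a i"
      using that(2) unfolding g_def gfun_def by auto
    then have Dhb: "D a i \<ge> hb i" using Gsel_H by force
    have "real (s - i) * real n - real (d - l)
          \<le> real (delta1 (s - i) T2 (enc1 (s - i) (Gsel s d l n T2 f i a)) (enc1 (s - i) (H a i)))"
      by (rule delta1_enc_dist[OF fin2 card2 ne Gsel_deg[OF fin2 card2] degH])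
    moreover have "delta1 (s - i) T2 (enc1 (s - i) (Gsel s d l n T2 f i a)) (enc1 (s - i) (H a i))
       \<le> delta1 (s - i) T2 (enc1 (s - i) (Gsel s d l n T2 f i a)) (fia s f i a)
         + delta1 (s - i) T2 (fia s f i a) (enc1 (s - i) (H a i))"
      by (rule delta1_tri)
    moreover have "delta1 (s - i) T2 (enc1 (s - i) (Gsel s d l n T2 f i a)) (fia s f i a)
       = delta1 (s - i) T2 (fia s f i a) (enc1 (s - i) (Gsel s d l n T2 f i a))"
      by (rule delta1_sym)
    ultimately have "delta1 (s - i) T2 (enc1 (s - i) (Gsel s d l n T2 f i a)) (enc1 (s - i) (H a i))
       \<le> delta1 (s - i) T2 (fia s f i a) (enc1 (s - i) (Gsel s d l n T2 f i a))
         + delta1 (s - i) T2 (fia s f i a) (enc1 (s - i) (H a i))" and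
      dd: "real (s - i) * real n - real (d - l)
          \<le> real (delta1 (s - i) T2 (enc1 (s - i) (Gsel s d l n T2 f i a)) (enc1 (s - i) (H a i)))"
      by simp_all
    then have "real (delta1 (s - i) T2 (enc1 (s - i) (Gsel s d l n T2 f i a)) (enc1 (s - i) (H a i)))
       \<le> X a i + D a i" unfolding X_def D_def by (metis of_nat_add of_nat_le_iff)
    moreover have "2 * hb i = real (s - i) * real n - real (d - l)" unfolding hb_def by simp
    ultimately have "2 * hb i \<le> X a i + D a i" using dd by linarith
    then show ?thesis using Dhb w_eq[of a i] by linarith
  qed
  have term_le: "(if i = 0 then real n * (real (s - i) - real (d - l) / real n) - w a i
         else max (real n * (real (s - i) - real (d - l) / real n) - w a i)
                  (Max (w a ` {..<i}))) \<le> S a"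
    if "a \<in> Aset r T1 g R i" "i < r" for a i
  proof -
    have A: "real n * (real (s - i) - real (d - l) / real n) - w a i \<le> S a"
      using main[OF that] DS[of a i] hb_eq2[of i] by linarith
    show ?thesis
    proof (cases "i = 0")
      case True then show ?thesis using A by simp
    next
      case False
      then have "Max (w a ` {..<i}) \<le> S a" using wS by (subst Max_le_iff) auto
      then show ?thesis using A False by simp
    qed
  qed
  have term_r: "(if r = 0 then 0 else Max (w a ` {..<r})) \<le> S a" for a
  proof (cases "r = 0")
    case False
    then have "Max (w a ` {..<r}) \<le> S a" using wS by (subst Max_le_iff) auto
    then show ?thesis using False by simp
  qed (use S0 in simp)
  have "Gamma s d l n r T1 w g R
        \<le> (\<Sum>i<r. \<Sum>a\<in>Aset r T1 g R i. S a) + (\<Sum>a\<in>Aset r T1 g R r. S a)"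
    unfolding Gamma_def
    by (intro add_mono sum_mono term_le term_r) auto
  also have "\<dots> = (\<Sum>i<Suc r. \<Sum>a\<in>Aset r T1 g R i. S a)" by simp
  also have "\<dots> = (\<Sum>a\<in>(\<Union>i<Suc r. Aset r T1 g R i). S a)"
  proof (rule sum.UNION_disjoint[symmetric])
    show "finite {..<Suc r}" by simp
    show "\<forall>i\<in>{..<Suc r}. finite (Aset r T1 g R i)"
      using fin1 unfolding Aset_def by auto
    show "\<forall>i\<in>{..<Suc r}. \<forall>j\<in>{..<Suc r}. i \<noteq> j \<longrightarrow> Aset r T1 g R i \<inter> Aset r T1 g R j = {}"
      unfolding Aset_def by auto
  qed
  also have "\<dots> \<le> (\<Sum>a\<in>T1. S a)"
    by (rule sum_mono2[OF fin1]) (auto simp: Aset_def S0)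
  finally show "Gamma s d l n r T1 (wfun s d l n T2 f) (gfun r s d l n T2 f) (coeff P (d - l))
           \<le> real (delta2 s T1 T2 f (enc2 s P))"
    unfolding delta2_eq w_def g_def R_def .
qed

end
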